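(* If $(\Phi,D)$ is a labeled continuous information algebra, then its associated domain-free information algebra $(\Phi/\sigma,D)$ is a domain-free continuous information algebra.
   Context: A labeled information algebra $(\Phi,D)$ consists of a lattice $D$, a set $\Phi$ with labeling $d:\Phi\to D$, combination $\otimes$ and marginalization $\phi^{\downarrow x}$ for $x\le d(\phi)$, such that: $\otimes$ is associative and commutative; for each $s\in D$ there is $e_s$ with $d(e_s)=s$ and $e_s\otimes\phi=\phi$ whenever $d(\phi)=s$; $d(\phi\otimes\psi)=d(\phi)\vee d(\psi)$; $d(\phi^{\downarrow x})=x$; $(\phi^{\downarrow y})^{\downarrow x}=\phi^{\downarrow x}$ for $x\le y\le d(\phi)$; $(\phi\otimes\psi)^{\downarrow x}=\phi\otimes\psi^{\downarrow x\wedge y}$ when $d(\phi)=x$, $d(\psi)=y$; $e_y^{\downarrow x}=e_x$ for $x\le y$; $\phi\otimes\phi^{\downarrow x}=\phi$. In any (labeled or domain-free) information algebra, $\psi\le\phi$ iff $\psi\otimes\phi=\phi$; suprema refer to this order; $a\ll b$ means: for every directed $X$ with $b\le\vee X$ there is $c\in X$ with $a\le c$. $\Phi_x=\{\phi:d(\phi)=x\}$ and $\ll_x$ is the way-below relation in $(\Phi_x,\le)$. $(\Phi,D)$ is labeled continuous if $D$ has a top element and there are sets $\Gamma_x\subseteq\Phi_x$ ($x\in D$), closed under combination and containing $e_x$, such that every directed $X\subseteq\Gamma_x$ has a supremum $\vee X\in\Phi_x$, and $\phi=\vee\{\psi\in\Gamma_x:\psi\ll_x\phi\}$ for all $\phi\in\Phi_x$.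 The associated domain-free algebra: for $y\ge d(\phi)$ let $\phi^{\uparrow y}=\phi\otimes e_y$; define $\phi\equiv\psi\pmod\sigma$ iff $\phi^{\uparrow d(\phi)\vee d(\psi)}=\psi^{\uparrow d(\phi)\vee d(\psi)}$; on $\Phi/\sigma$ set $[\phi]_\sigma\otimes[\psi]_\sigma=[\phi\otimes\psi]_\sigma$ and $[\phi]_\sigma^{\Rightarrow x}=[(\phi^{\uparrow x\vee d(\phi)})^{\downarrow x}]_\sigma$. A domain-free information algebra (a set with associative commutative combination with neutral element $e$ and focusing $\Rightarrow$ satisfying transitivity, combination, support and idempotency axioms) $(\Phi',D)$, with $D$ having a top element, is continuous if there exists $\Gamma\subseteq\Phi'$, closed under combination and containing $e$, such that every directed subset of $\Gamma$ has a supremum in $\Phi'$ and $\phi=\vee\{\psi\in\Gamma:\psi\ll\phi\}$ for all $\phi\in\Phi'$. *)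

theory Defs
  imports Main
begin

definition info_le :: "('a \<Rightarrow> 'a \<Rightarrow> 'a) \<Rightarrow> 'a \<Rightarrow> 'a \<Rightarrow> bool" where
  "info_le comb a b \<longleftrightarrow> comb a b = b"

definition is_sup_in :: "('a \<Rightarrow> 'a \<Rightarrow> 'a) \<Rightarrow> 'a set \<Rightarrow> 'a set \<Rightarrow> 'a \<Rightarrow> bool" where
  "is_sup_in comb C X s \<longleftrightarrow> s \<in> C \<and> (\<forall>x\<in>X. info_le comb x s) \<and>
     (\<forall>u\<in>C. (\<forall>x\<in>X. info_le comb x u) \<longrightarrow> info_le comb s u)"

definition directed_set :: "('a \<Rightarrow> 'a \<Rightarrow> 'a) \<Rightarrow> 'a set \<Rightarrow> bool" where
  "directed_set comb X \<longleftrightarrow> X \<noteq> {} \<and>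
     (\<forall>a\<in>X. \<forall>b\<in>X. \<exists>c\<in>X. info_le comb a c \<and> info_le comb b c)"

definition way_below_in :: "('a \<Rightarrow> 'a \<Rightarrow> 'a) \<Rightarrow> 'a set \<Rightarrow> 'a \<Rightarrow> 'a \<Rightarrow> bool" where
  "way_below_in comb C a b \<longleftrightarrow>
     (\<forall>X s. X \<subseteq> C \<longrightarrow> directed_set comb X \<longrightarrow> is_sup_in comb C X s \<longrightarrow>
        info_le comb b s \<longrightarrow> (\<exists>c\<in>X. info_le comb a c))"

text \<open>Phi is the type 'phi, D is the lattice type 'd; d is the labeling, comb the combination,
  marg phi x the marginal of phi to x (meaningful for x \<le> d phi), e s the neutral element of Phi_s.\<close>
definition labeled_info_algebra ::
  "('phi \<Rightarrow> 'd::lattice) \<Rightarrow> ('phi \<Rightarrow> 'phi \<Rightarrow> 'phi) \<Rightarrow> ('phi \<Rightarrow> 'd \<Rightarrow> 'phi) \<Rightarrow> ('d \<Rightarrow> 'phi) \<Rightarrow> bool" where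
  "labeled_info_algebra d comb marg e \<longleftrightarrow>
     (\<forall>a b c. comb (comb a b) c = comb a (comb b c)) \<and>
     (\<forall>a b. comb a b = comb b a) \<and>
     (\<forall>s. d (e s) = s \<and> (\<forall>phi. d phi = s \<longrightarrow> comb (e s) phi = phi)) \<and>
     (\<forall>phi psi. d (comb phi psi) = sup (d phi) (d psi)) \<and>
     (\<forall>phi x. x \<le> d phi \<longrightarrow> d (marg phi x) = x) \<and>
     (\<forall>phi x y. x \<le> y \<and> y \<le> d phi \<longrightarrow> marg (marg phi y) x = marg phi x) \<and>
     (\<forall>phi psi x y. d phi = x \<and> d psi = y \<longrightarrow>
        marg (comb phi psi) x = comb phi (marg psi (inf x y))) \<and>
     (\<forall>x y. x \<le> y \<longrightarrow> marg (e y) x = e x) \<and>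
     (\<forall>phi x. x \<le> d phi \<longrightarrow> comb phi (marg phi x) = phi)"

definition label_set :: "('phi \<Rightarrow> 'd) \<Rightarrow> 'd \<Rightarrow> 'phi set" where
  "label_set d x = {phi. d phi = x}"

definition labeled_continuous ::
  "('phi \<Rightarrow> 'd::lattice) \<Rightarrow> ('phi \<Rightarrow> 'phi \<Rightarrow> 'phi) \<Rightarrow> ('phi \<Rightarrow> 'd \<Rightarrow> 'phi) \<Rightarrow> ('d \<Rightarrow> 'phi) \<Rightarrow> bool" where
  "labeled_continuous d comb marg e \<longleftrightarrow>
     labeled_info_algebra d comb marg e \<and>
     (\<exists>t::'d. \<forall>x. x \<le> t) \<and>
     (\<exists>\<Gamma> :: 'd \<Rightarrow> 'phi set. \<forall>x.
        \<Gamma> x \<subseteq> label_set d x \<and>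
        (\<forall>a\<in>\<Gamma> x. \<forall>b\<in>\<Gamma> x. comb a b \<in> \<Gamma> x) \<and>
        e x \<in> \<Gamma> x \<and>
        (\<forall>X. X \<subseteq> \<Gamma> x \<longrightarrow> directed_set comb X \<longrightarrow>
              (\<exists>s. is_sup_in comb (label_set d x) X s)) \<and>
        (\<forall>phi\<in>label_set d x.
           is_sup_in comb (label_set d x)
             {psi \<in> \<Gamma> x. way_below_in comb (label_set d x) psi phi} phi))"

definition domain_free_info_algebra ::
  "'a set \<Rightarrow> ('a \<Rightarrow> 'a \<Rightarrow> 'a) \<Rightarrow> ('a \<Rightarrow> 'd::lattice \<Rightarrow> 'a) \<Rightarrow> 'a \<Rightarrow> bool" where
  "domain_free_info_algebra C comb focus n \<longleftrightarrow>
     (\<forall>a\<in>C. \<forall>b\<in>C. comb a b \<in> C) \<and>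
     (\<forall>a\<in>C. \<forall>x. focus a x \<in> C) \<and>
     n \<in> C \<and>
     (\<forall>a\<in>C. \<forall>b\<in>C. \<forall>c\<in>C. comb (comb a b) c = comb a (comb b c)) \<and>
     (\<forall>a\<in>C. \<forall>b\<in>C. comb a b = comb b a) \<and>
     (\<forall>a\<in>C. comb n a = a) \<and>
     (\<forall>a\<in>C. \<forall>x y. focus (focus a x) y = focus a (inf x y)) \<and>
     (\<forall>a\<in>C. \<forall>b\<in>C. \<forall>x. focus (comb (focus a x) b) x = comb (focus a x) (focus b x)) \<and>
     (\<forall>a\<in>C. \<exists>x. focus a x = a) \<and>
     (\<forall>a\<in>C. \<forall>x. comb a (focus a x) = a)"

definition domain_free_continuous ::
  "'a set \<Rightarrow> ('a \<Rightarrow> 'a \<Rightarrow> 'a) \<Rightarrow> ('a \<Rightarrow> 'd::lattice \<Rightarrow> 'a) \<Rightarrow> 'a \<Rightarrow> bool" where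
  "domain_free_continuous C comb focus n \<longleftrightarrow>
     domain_free_info_algebra C comb focus n \<and>
     (\<exists>t::'d. \<forall>x. x \<le> t) \<and>
     (\<exists>\<Gamma>. \<Gamma> \<subseteq> C \<and>
        (\<forall>a\<in>\<Gamma>. \<forall>b\<in>\<Gamma>. comb a b \<in> \<Gamma>) \<and>
        n \<in> \<Gamma> \<and>
        (\<forall>X. X \<subseteq> \<Gamma> \<longrightarrow> directed_set comb X \<longrightarrow> (\<exists>s. is_sup_in comb C X s)) \<and>
        (\<forall>a\<in>C. is_sup_in comb C {b \<in> \<Gamma>. way_below_in comb C b a} a))"

definition vac_ext :: "('phi \<Rightarrow> 'phi \<Rightarrow> 'phi) \<Rightarrow> ('d \<Rightarrow> 'phi) \<Rightarrow> 'phi \<Rightarrow> 'd \<Rightarrow> 'phi" where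
  "vac_ext comb e phi y = comb phi (e y)"

definition sigma_rel ::
  "('phi \<Rightarrow> 'd::lattice) \<Rightarrow> ('phi \<Rightarrow> 'phi \<Rightarrow> 'phi) \<Rightarrow> ('d \<Rightarrow> 'phi) \<Rightarrow> ('phi \<times> 'phi) set" where
  "sigma_rel d comb e = {(phi, psi).
     vac_ext comb e phi (sup (d phi) (d psi)) = vac_ext comb e psi (sup (d phi) (d psi))}"

definition sigma_class ::
  "('phi \<Rightarrow> 'd::lattice) \<Rightarrow> ('phi \<Rightarrow> 'phi \<Rightarrow> 'phi) \<Rightarrow> ('d \<Rightarrow> 'phi) \<Rightarrow> 'phi \<Rightarrow> 'phi set" where
  "sigma_class d comb e phi = sigma_rel d comb e `` {phi}"

definition quot_carrier ::
  "('phi \<Rightarrow> 'd::lattice) \<Rightarrow> ('phi \<Rightarrow> 'phi \<Rightarrow> 'phi) \<Rightarrow> ('d \<Rightarrow> 'phi) \<Rightarrow> 'phi set set" where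
  "quot_carrier d comb e = UNIV // sigma_rel d comb e"

definition quot_comb ::
  "('phi \<Rightarrow> 'd::lattice) \<Rightarrow> ('phi \<Rightarrow> 'phi \<Rightarrow> 'phi) \<Rightarrow> ('d \<Rightarrow> 'phi) \<Rightarrow> 'phi set \<Rightarrow> 'phi set \<Rightarrow> 'phi set" where
  "quot_comb d comb e A B =
     sigma_class d comb e (comb (SOME phi. phi \<in> A) (SOME psi. psi \<in> B))"

definition quot_focus ::
  "('phi \<Rightarrow> 'd::lattice) \<Rightarrow> ('phi \<Rightarrow> 'phi \<Rightarrow> 'phi) \<Rightarrow> ('phi \<Rightarrow> 'd \<Rightarrow> 'phi) \<Rightarrow> ('d \<Rightarrow> 'phi)
     \<Rightarrow> 'phi set \<Rightarrow> 'd \<Rightarrow> 'phi set" where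
  "quot_focus d comb marg e A x =
     (let phi = (SOME phi. phi \<in> A) in
      sigma_class d comb e (marg (vac_ext comb e phi (sup x (d phi))) x))"

end

theory Submission
  imports Defs
begin



lemma transfer_directed:
  assumes img: "f ` L = Q"
    and ord: "\<And>a b. a\<in>L \<Longrightarrow> b\<in>L \<Longrightarrow> info_le c1 a b = info_le c2 (f a) (f b)"
    and X: "X \<subseteq> L"
  shows "directed_set c1 X \<longleftrightarrow> directed_set c2 (f`X)"
proof -
  have o: "\<And>a b. a\<in>X \<Longrightarrow> b\<in>X \<Longrightarrow> info_le c1 a b = info_le c2 (f a) (f b)"
    using ord X by blast
  show ?thesis unfolding directed_set_def
  proof (intro iffI conjI ballI)
    assume "X \<noteq> {} \<and> (\<forall>a\<in>X. \<forall>b\<in>X. \<exists>c\<in>X. info_le c1 a c \<and> info_le c1 b c)"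
    then have h: "X \<noteq> {}" "\<And>a b. a\<in>X \<Longrightarrow> b\<in>X \<Longrightarrow> \<exists>c\<in>X. info_le c1 a c \<and> info_le c1 b c" by auto
    show "f ` X \<noteq> {}" using h(1) by simp
    fix A B assume AB: "A \<in> f ` X" "B \<in> f ` X"
    then obtain a b where ab: "a \<in> X" "b \<in> X" "A = f a" "B = f b" by blast
    then obtain c where c: "c \<in> X" "info_le c1 a c" "info_le c1 b c" using h(2) by blast
    have "f c \<in> f ` X" using c(1) by blast
    moreover have "info_le c2 A (f c)" using o[OF ab(1) c(1)] c(2) ab(3) by simp
    moreover have "info_le c2 B (f c)" using o[OF ab(2) c(1)] c(3) ab(4) by simp
    ultimately show "\<exists>c\<in>f ` X. info_le c2 A c \<and> info_le c2 B c" by blast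
  next
    assume "f ` X \<noteq> {} \<and> (\<forall>a\<in>f ` X. \<forall>b\<in>f ` X. \<exists>c\<in>f ` X. info_le c2 a c \<and> info_le c2 b c)"
    then have h: "f ` X \<noteq> {}" "\<And>a b. a\<in>f ` X \<Longrightarrow> b\<in>f ` X \<Longrightarrow> \<exists>c\<in>f ` X. info_le c2 a c \<and> info_le c2 b c" by auto
    show "X \<noteq> {}" using h(1) by simp
    fix a b assume ab: "a \<in> X" "b \<in> X"
    then obtain C where C: "C \<in> f ` X" "info_le c2 (f a) C" "info_le c2 (f b) C" using h(2) by blast
    then obtain c where c: "c \<in> X" "C = f c" by blast
    have "info_le c1 a c" using o[OF ab(1) c(1)] C(2) c(2) by simp
    moreover have "info_le c1 b c" using o[OF ab(2) c(1)] C(3) c(2) by simp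
    ultimately show "\<exists>c\<in>X. info_le c1 a c \<and> info_le c1 b c" using c(1) by blast
  qed
qed

lemma transfer_sup:
  assumes inj: "inj_on f L" and img: "f ` L = Q"
    and ord: "\<And>a b. a\<in>L \<Longrightarrow> b\<in>L \<Longrightarrow> info_le c1 a b = info_le c2 (f a) (f b)"
    and X: "X \<subseteq> L" and s: "s \<in> L"
  shows "is_sup_in c1 L X s \<longleftrightarrow> is_sup_in c2 Q (f`X) (f s)"
proof -
  have o2: "\<And>a u. a\<in>X \<Longrightarrow> u \<in> L \<Longrightarrow> info_le c1 a u = info_le c2 (f a) (f u)"
    using ord X by blast
  have o3: "\<And>u. u \<in> L \<Longrightarrow> info_le c1 s u = info_le c2 (f s) (f u)"
    using ord s by blast
  have ub: "(\<forall>x\<in>X. info_le c1 x u) \<longleftrightarrow> (\<forall>x\<in>f ` X. info_le c2 x (f u))" if "u \<in> L" for u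
    using o2[OF _ that] by auto
  have fs: "f s \<in> Q" using img s by blast
  have allQ: "(\<forall>v\<in>Q. P v) \<longleftrightarrow> (\<forall>w\<in>L. P (f w))" for P using img by blast
  show ?thesis unfolding is_sup_in_def allQ
    using ub[OF s] ub o3 s fs by auto
qed

lemma transfer_wb:
  assumes inj: "inj_on f L" and img: "f ` L = Q"
    and ord: "\<And>a b. a\<in>L \<Longrightarrow> b\<in>L \<Longrightarrow> info_le c1 a b = info_le c2 (f a) (f b)"
    and a: "a \<in> L" and b: "b \<in> L"
  shows "way_below_in c1 L a b \<longleftrightarrow> way_below_in c2 Q (f a) (f b)"
proof
  assume wb: "way_below_in c1 L a b"
  show "way_below_in c2 Q (f a) (f b)" unfolding way_below_in_def
  proof (intro allI impI)
    fix Y S assume Y: "Y \<subseteq> Q" "directed_set c2 Y" "is_sup_in c2 Q Y S" "info_le c2 (f b) S"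
    define X where "X = L \<inter> f -` Y"
    have XL: "X \<subseteq> L" unfolding X_def by blast
    have fX: "f ` X = Y" using Y(1) img unfolding X_def by blast
    have dX: "directed_set c1 X" using transfer_directed[OF img ord XL] fX Y(2) by simp
    have "S \<in> Q" using Y(3) unfolding is_sup_in_def by blast
    then obtain s where s: "s \<in> L" "S = f s" using img by blast
    have sX: "is_sup_in c1 L X s" using transfer_sup[OF inj img ord XL s(1)] fX Y(3) s by simp
    have bs: "info_le c1 b s" using ord[OF b s(1)] Y(4) s by simp
    have "\<exists>c\<in>X. info_le c1 a c" using wb unfolding way_below_in_def
      using XL dX sX bs by blast
    then obtain c where c: "c \<in> X" "info_le c1 a c" by blast
    have "f c \<in> Y" using c(1) fX by blast
    moreover have "info_le c2 (f a) (f c)" using ord[OF a] c XL by blast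
    ultimately show "\<exists>c\<in>Y. info_le c2 (f a) c" by blast
  qed
next
  assume wb: "way_below_in c2 Q (f a) (f b)"
  show "way_below_in c1 L a b" unfolding way_below_in_def
  proof (intro allI impI)
    fix X s assume X: "X \<subseteq> L" "directed_set c1 X" "is_sup_in c1 L X s" "info_le c1 b s"
    have sL: "s \<in> L" using X(3) unfolding is_sup_in_def by blast
    have 1: "f ` X \<subseteq> Q" using X(1) img by blast
    have 2: "directed_set c2 (f ` X)" using transfer_directed[OF img ord X(1)] X(2) by simp
    have 3: "is_sup_in c2 Q (f`X) (f s)" using transfer_sup[OF inj img ord X(1) sL] X(3) by simp
    have 4: "info_le c2 (f b) (f s)" using ord[OF b sL] X(4) by simp
    have "\<exists>C\<in>f ` X. info_le c2 (f a) C" using wb 1 2 3 4 unfolding way_below_in_def by blast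
    then obtain C where C: "C \<in> f ` X" "info_le c2 (f a) C" by blast
    then obtain c where c: "c \<in> X" "C = f c" by blast
    have "info_le c1 a c" using C(2) c ord[OF a] X(1) by blast
    then show "\<exists>c\<in>X. info_le c1 a c" using c(1) by blast
  qed
qed



locale LIA =
  fixes d :: "'phi \<Rightarrow> 'd::lattice" and comb :: "'phi \<Rightarrow> 'phi \<Rightarrow> 'phi"
    and marg :: "'phi \<Rightarrow> 'd \<Rightarrow> 'phi" and e :: "'d \<Rightarrow> 'phi" and t :: 'd
  assumes A: "labeled_info_algebra d comb marg e"
    and top: "\<And>x. x \<le> t"
begin

lemma assoc: "comb (comb a b) c = comb a (comb b c)" using A unfolding labeled_info_algebra_def by metis
lemma commute: "comb a b = comb b a" using A unfolding labeled_info_algebra_def by metis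
lemma lab_e[simp]: "d (e s) = s" using A unfolding labeled_info_algebra_def by metis
lemma neut: "d phi = s \<Longrightarrow> comb (e s) phi = phi" using A unfolding labeled_info_algebra_def by metis
lemma lab_comb[simp]: "d (comb phi psi) = sup (d phi) (d psi)" using A unfolding labeled_info_algebra_def by metis
lemma lab_marg: "x \<le> d phi \<Longrightarrow> d (marg phi x) = x" using A unfolding labeled_info_algebra_def by metis
lemma trans_marg: "x \<le> y \<Longrightarrow> y \<le> d phi \<Longrightarrow> marg (marg phi y) x = marg phi x"
  using A unfolding labeled_info_algebra_def by metis
lemma comb_marg: "d phi = x \<Longrightarrow> d psi = y \<Longrightarrow> marg (comb phi psi) x = comb phi (marg psi (inf x y))"
  using A unfolding labeled_info_algebra_def by metis
lemma marg_e: "x \<le> y \<Longrightarrow> marg (e y) x = e x" using A unfolding labeled_info_algebra_def by metis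
lemma idem: "x \<le> d phi \<Longrightarrow> comb phi (marg phi x) = phi" using A unfolding labeled_info_algebra_def by metis

lemma lcomm: "comb a (comb b c) = comb b (comb a c)"
  by (metis assoc commute)

lemma ee: "x \<le> y \<Longrightarrow> comb (e x) (e y) = e y"
  using idem[of x "e y"] marg_e[of x y] commute by simp

lemma ee_same[simp]: "comb (e x) (e x) = e x" using ee by simp

lemma phi_e: "comb phi (e (d phi)) = phi" using neut commute by metis

lemma ee_sup: "comb (e x) (e y) = e (sup x y)"
proof -
  let ?c = "comb (e x) (e y)"
  have 1: "comb (e (sup x y)) ?c = ?c" by (rule neut) simp
  have "comb ?c (e (sup x y)) = comb (e x) (comb (e y) (e (sup x y)))" by (rule assoc)
  also have "\<dots> = e (sup x y)" by (simp add: ee)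
  finally show ?thesis using 1 commute by metis
qed

lemma marg_self: "marg phi (d phi) = phi"
  using comb_marg[of phi "d phi" "e (d phi)" "d phi"] marg_e[of "d phi" "d phi"] phi_e by simp

lemma L3: "d phi = x \<Longrightarrow> marg (comb phi (e y)) y = comb (marg phi (inf x y)) (e y)"
  using comb_marg[of "e y" y phi x] commute by (simp add: inf_commute)

lemma phi_e_sup: "comb phi (e (sup (d phi) y)) = comb phi (e y)"
  by (metis assoc ee_sup phi_e)

definition u where "u phi = comb phi (e t)"

lemma d_u[simp]: "d (u phi) = t" unfolding u_def using top by (simp add: sup_absorb2)

lemma ee_t[simp]: "comb (e x) (e t) = e t" using ee top by blast

lemma uu[simp]: "u (u phi) = u phi" unfolding u_def by (simp add: assoc)

lemma u_top: "d phi = t \<Longrightarrow> u phi = phi" unfolding u_def using phi_e by metis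

lemma u_comb: "u (comb a b) = comb (u a) (u b)"
  unfolding u_def by (metis assoc commute ee_t)

lemma L2: "d phi \<le> y \<Longrightarrow> marg (u phi) y = comb phi (e y)"
proof -
  assume y: "d phi \<le> y"
  let ?p = "comb phi (e y)"
  have dp: "d ?p = y" using y by (simp add: sup_absorb2)
  have "u phi = comb ?p (e t)" unfolding u_def by (simp add: assoc ee top)
  then have "marg (u phi) y = comb ?p (marg (e t) (inf y t))" using comb_marg[OF dp, of "e t" t] by simp
  also have "\<dots> = comb ?p (e y)" using top marg_e by (simp add: inf_absorb1)
  also have "\<dots> = ?p" by (simp add: assoc)
  finally show ?thesis .
qed

lemma L4: "u (marg (u phi) y) = u (marg phi (inf (d phi) y))"
proof -
  let ?x = "d phi" let ?z = "sup ?x y"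
  have "marg (u phi) y = marg (marg (u phi) ?z) y" using trans_marg[of y ?z "u phi"] top by simp
  also have "\<dots> = marg (comb phi (e ?z)) y" using L2[of phi ?z] by simp
  also have "\<dots> = marg (comb phi (e y)) y" using phi_e_sup by simp
  also have "\<dots> = comb (marg phi (inf ?x y)) (e y)" using L3 by simp
  finally show ?thesis unfolding u_def by (simp add: assoc ee top)
qed

lemma sigma_iff: "(phi, psi) \<in> sigma_rel d comb e \<longleftrightarrow> u phi = u psi"
proof
  let ?s = "sup (d phi) (d psi)"
  assume "(phi, psi) \<in> sigma_rel d comb e"
  then have "comb phi (e ?s) = comb psi (e ?s)" unfolding sigma_rel_def vac_ext_def by simp
  then have "comb (comb phi (e ?s)) (e t) = comb (comb psi (e ?s)) (e t)" by simp
  then show "u phi = u psi" unfolding u_def by (simp add: assoc)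
next
  let ?s = "sup (d phi) (d psi)"
  assume "u phi = u psi"
  then have "marg (u phi) ?s = marg (u psi) ?s" by simp
  then show "(phi, psi) \<in> sigma_rel d comb e" unfolding sigma_rel_def vac_ext_def
    using L2[of phi ?s] L2[of psi ?s] by simp
qed

abbreviation cls where "cls \<equiv> sigma_class d comb e"

lemma cls_eq: "cls phi = {psi. u psi = u phi}"
  unfolding sigma_class_def using sigma_iff by auto

lemma cls_inj: "cls a = cls b \<longleftrightarrow> u a = u b"
  unfolding cls_eq by auto

lemma in_cls: "a \<in> cls a" unfolding cls_eq by simp

lemma Q_eq: "quot_carrier d comb e = range cls"
  unfolding quot_carrier_def quotient_def sigma_class_def by auto

lemma some_cls: "u (SOME psi. psi \<in> cls a) = u a"
proof -
  have "(SOME psi. psi \<in> cls a) \<in> cls a" using in_cls by (rule someI)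
  then show ?thesis unfolding cls_eq by simp
qed

lemma qcomb: "quot_comb d comb e (cls a) (cls b) = cls (comb a b)"
  unfolding quot_comb_def cls_inj u_comb some_cls ..

lemma qfocus: "quot_focus d comb marg e (cls a) x = cls (marg (u a) x)"
proof -
  define r where "r = (SOME psi. psi \<in> cls a)"
  have ur: "u r = u a" unfolding r_def by (rule some_cls)
  let ?y = "sup x (d r)"
  have "vac_ext comb e r ?y = marg (u r) ?y" unfolding vac_ext_def using L2[of r ?y] by simp
  then have "marg (vac_ext comb e r ?y) x = marg (u r) x" using trans_marg[of x ?y "u r"] top by simp
  then show ?thesis unfolding quot_focus_def Let_def r_def[symmetric] ur by simp
qed

lemma cls_e: "cls (e z) = cls (e t)"
  unfolding cls_inj u_def by simp

end



context LIA begin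

abbreviation qc where "qc \<equiv> quot_comb d comb e"
abbreviation qf where "qf \<equiv> quot_focus d comb marg e"

lemma f_trans: "qf (qf (cls a) x) y = qf (cls a) (inf x y)"
proof -
  let ?m = "marg (u a) x"
  have dm: "d ?m = x" using lab_marg top by simp
  have "u (marg (u ?m) y) = u (marg ?m (inf x y))" using L4[of ?m y] dm by simp
  also have "\<dots> = u (marg (u a) (inf x y))" using trans_marg[of "inf x y" x "u a"] top by simp
  finally show ?thesis unfolding qfocus cls_inj .
qed

lemma f_comb: "qf (qc (qf (cls a) x) (cls b)) x = qc (qf (cls a) x) (qf (cls b) x)"
proof -
  let ?m = "marg (u a) x"
  have dm: "d ?m = x" using lab_marg top by simp
  have "u (comb ?m b) = comb ?m (u b)" unfolding u_def by (simp add: assoc)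
  then have "marg (u (comb ?m b)) x = comb ?m (marg (u b) x)"
    using comb_marg[OF dm, of "u b" t] top by (simp add: inf_absorb1)
  then show ?thesis unfolding qfocus qcomb by simp
qed

lemma f_supp: "qf (cls a) t = cls a"
  unfolding qfocus cls_inj using marg_self[of "u a"] by simp

lemma f_idem: "qc (cls a) (qf (cls a) x) = cls a"
proof -
  have "u (comb a (marg (u a) x)) = comb (u a) (marg (u a) x)" unfolding u_def
    by (simp add: assoc commute[of "marg (comb a (e t)) x" "e t"])
  also have "\<dots> = u a" using idem[of x "u a"] top by simp
  finally show ?thesis unfolding qfocus qcomb cls_inj .
qed

lemma f_neut: "qc (cls (e z)) (cls a) = cls a"
proof -
  have "u (comb (e t) a) = comb (e t) (comb a (e t))" unfolding u_def by (rule assoc)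
  also have "\<dots> = comb (e t) (comb (e t) a)" by (rule arg_cong[where f="comb (e t)"], rule commute)
  also have "\<dots> = comb (comb (e t) (e t)) a" by (rule assoc[symmetric])
  also have "\<dots> = comb (e t) a" by (rule arg_cong[where f="\<lambda>q. comb q a"], rule ee_same)
  also have "\<dots> = u a" unfolding u_def by (rule commute)
  finally have "u (comb (e t) a) = u a" .
  then show ?thesis unfolding cls_e[of z] qcomb cls_inj .
qed

lemma ball_range: "(\<forall>A\<in>range cls. P A) \<longleftrightarrow> (\<forall>a. P (cls a))" by blast

lemma dfa: "domain_free_info_algebra (range cls) qc qf (cls (e z))"
  unfolding domain_free_info_algebra_def ball_range
proof (intro conjI allI)
  fix a b c x y
  show "qc (cls a) (cls b) \<in> range cls" unfolding qcomb by blast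
  show "qf (cls a) x \<in> range cls" unfolding qfocus by blast
  show "cls (e z) \<in> range cls" by blast
  show "qc (qc (cls a) (cls b)) (cls c) = qc (cls a) (qc (cls b) (cls c))" unfolding qcomb assoc ..
  show "qc (cls a) (cls b) = qc (cls b) (cls a)" unfolding qcomb by (subst commute) (rule refl)
  show "qc (cls (e z)) (cls a) = cls a" by (rule f_neut)
  show "qf (qf (cls a) x) y = qf (cls a) (inf x y)" by (rule f_trans)
  show "qf (qc (qf (cls a) x) (cls b)) x = qc (qf (cls a) x) (qf (cls b) x)" by (rule f_comb)
  show "\<exists>x. qf (cls a) x = cls a" using f_supp by blast
  show "qc (cls a) (qf (cls a) x) = cls a" by (rule f_idem)
qed

lemma inj_L: "inj_on cls (label_set d t)"
proof (rule inj_onI)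
  fix a b assume "a \<in> label_set d t" "b \<in> label_set d t" "cls a = cls b"
  then show "a = b" unfolding label_set_def cls_inj using u_top by simp
qed

lemma img_L: "cls ` (label_set d t) = range cls"
proof
  show "range cls \<subseteq> cls ` label_set d t"
  proof
    fix A assume "A \<in> range cls"
    then obtain a where A: "A = cls a" by blast
    have "A = cls (u a)" unfolding A cls_inj by simp
    moreover have "u a \<in> label_set d t" unfolding label_set_def by simp
    ultimately show "A \<in> cls ` label_set d t" by blast
  qed
qed blast

lemma ord_L: "a \<in> label_set d t \<Longrightarrow> b \<in> label_set d t \<Longrightarrow>
   info_le comb a b = info_le qc (cls a) (cls b)"
  unfolding info_le_def qcomb cls_inj label_set_def using u_top[of "comb a b"] u_top[of b] by simp

end

context LIA begin
lemma main:
  assumes G: "G \<subseteq> label_set d t" "\<forall>a\<in>G. \<forall>b\<in>G. comb a b \<in> G" "e t \<in> G"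
    "\<forall>X. X \<subseteq> G \<longrightarrow> directed_set comb X \<longrightarrow> (\<exists>s. is_sup_in comb (label_set d t) X s)"
    "\<forall>phi\<in>label_set d t.
           is_sup_in comb (label_set d t)
             {psi \<in> G. way_below_in comb (label_set d t) psi phi} phi"
  shows "domain_free_continuous (quot_carrier d comb e) qc qf (cls (e z))"
  unfolding domain_free_continuous_def Q_eq
proof (intro conjI)
  let ?L = "label_set d t"
  show "domain_free_info_algebra (range cls) qc qf (cls (e z))" by (rule dfa)
  show "\<exists>t::'d. \<forall>x. x \<le> t" using top by blast
  show "\<exists>\<Gamma>\<subseteq>range cls.
       (\<forall>a\<in>\<Gamma>. \<forall>b\<in>\<Gamma>. qc a b \<in> \<Gamma>) \<and>
       cls (e z) \<in> \<Gamma> \<and>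
       (\<forall>X\<subseteq>\<Gamma>. directed_set qc X \<longrightarrow> (\<exists>s. is_sup_in qc (range cls) X s)) \<and>
       (\<forall>a\<in>range cls. is_sup_in qc (range cls) {b \<in> \<Gamma>. way_below_in qc (range cls) b a} a)"
  proof (intro exI[of _ "cls ` G"] conjI)
    show "cls ` G \<subseteq> range cls" by blast
    show "\<forall>a\<in>cls ` G. \<forall>b\<in>cls ` G. qc a b \<in> cls ` G" using G(2) by (auto simp: qcomb)
    show "cls (e z) \<in> cls ` G" unfolding cls_e[of z] using G(3) by (rule imageI)
    show "\<forall>X\<subseteq>cls ` G. directed_set qc X \<longrightarrow> (\<exists>s. is_sup_in qc (range cls) X s)"
    proof (intro allI impI)
      fix X assume X: "X \<subseteq> cls ` G" "directed_set qc X"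
      define X0 where "X0 = G \<inter> cls -` X"
      have X0G: "X0 \<subseteq> G" unfolding X0_def by blast
      have X0L: "X0 \<subseteq> ?L" using X0G G(1) by blast
      have fX: "cls ` X0 = X" using X(1) unfolding X0_def by blast
      have "directed_set comb X0" using transfer_directed[OF img_L ord_L X0L] fX X(2) by simp
      then obtain s where s: "is_sup_in comb ?L X0 s" using G(4) X0G by blast
      have sL: "s \<in> ?L" using s unfolding is_sup_in_def by blast
      have "is_sup_in qc (range cls) X (cls s)"
        using transfer_sup[OF inj_L img_L ord_L X0L sL] s fX by simp
      then show "\<exists>s. is_sup_in qc (range cls) X s" by blast
    qed
    show "\<forall>A\<in>range cls. is_sup_in qc (range cls) {b \<in> cls ` G. way_below_in qc (range cls) b A} A"
    proof
      fix A assume "A \<in> range cls"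
      then obtain a0 where "A = cls a0" by blast
      then have A: "A = cls (u a0)" by (simp add: cls_inj)
      define a where "a = u a0"
      have aL: "a \<in> ?L" unfolding a_def label_set_def by simp
      define S where "S = {psi \<in> G. way_below_in comb ?L psi a}"
      have SL: "S \<subseteq> ?L" unfolding S_def using G(1) by blast
      have eq: "cls ` S = {b \<in> cls ` G. way_below_in qc (range cls) b A}"
      proof
        show "cls ` S \<subseteq> {b \<in> cls ` G. way_below_in qc (range cls) b A}"
        proof
          fix B assume "B \<in> cls ` S"
          then obtain g where g: "g \<in> G" "way_below_in comb ?L g a" "B = cls g" unfolding S_def by blast
          have gL: "g \<in> ?L" using g(1) G(1) by blast
          have "way_below_in qc (range cls) (cls g) (cls a)"
            using transfer_wb[OF inj_L img_L ord_L gL aL] g(2) by simp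
          then show "B \<in> {b \<in> cls ` G. way_below_in qc (range cls) b A}"
            using g(1,3) A unfolding a_def by blast
        qed
        show "{b \<in> cls ` G. way_below_in qc (range cls) b A} \<subseteq> cls ` S"
        proof
          fix B assume "B \<in> {b \<in> cls ` G. way_below_in qc (range cls) b A}"
          then obtain g where g: "g \<in> G" "B = cls g" "way_below_in qc (range cls) (cls g) (cls a)"
            using A unfolding a_def by blast
          have gL: "g \<in> ?L" using g(1) G(1) by blast
          have "way_below_in comb ?L g a"
            using transfer_wb[OF inj_L img_L ord_L gL aL] g(3) by simp
          then show "B \<in> cls ` S" using g(1,2) unfolding S_def by blast
        qed
      qed
      have "is_sup_in comb ?L S a" using G(5) aL unfolding S_def by blast
      then have "is_sup_in qc (range cls) (cls ` S) (cls a)"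
        using transfer_sup[OF inj_L img_L ord_L SL aL] by simp
      then show "is_sup_in qc (range cls) {b \<in> cls ` G. way_below_in qc (range cls) b A} A"
        using eq A a_def by simp
    qed
  qed
qed

end

theorem theorem4p10:
  fixes d :: "'phi \<Rightarrow> 'd::lattice"
    and comb :: "'phi \<Rightarrow> 'phi \<Rightarrow> 'phi"
    and marg :: "'phi \<Rightarrow> 'd \<Rightarrow> 'phi"
    and e :: "'d \<Rightarrow> 'phi"
  assumes "labeled_continuous d comb marg e"
  shows "\<forall>z. domain_free_continuous (quot_carrier d comb e) (quot_comb d comb e)
            (quot_focus d comb marg e) (sigma_class d comb e (e z))"
proof
  fix z
  have h: "labeled_info_algebra d comb marg e \<and> (\<exists>t::'d. \<forall>x. x \<le> t) \<and>
     (\<exists>\<Gamma> :: 'd \<Rightarrow> 'phi set. \<forall>x.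
        \<Gamma> x \<subseteq> label_set d x \<and>
        (\<forall>a\<in>\<Gamma> x. \<forall>b\<in>\<Gamma> x. comb a b \<in> \<Gamma> x) \<and>
        e x \<in> \<Gamma> x \<and>
        (\<forall>X. X \<subseteq> \<Gamma> x \<longrightarrow> directed_set comb X \<longrightarrow>
              (\<exists>s. is_sup_in comb (label_set d x) X s)) \<and>
        (\<forall>phi\<in>label_set d x.
           is_sup_in comb (label_set d x)
             {psi \<in> \<Gamma> x. way_below_in comb (label_set d x) psi phi} phi))"
    using assms unfolding labeled_continuous_def .
  have A: "labeled_info_algebra d comb marg e" using h by (rule conjunct1)
  obtain t :: 'd where t: "\<forall>x. x \<le> t" using conjunct1[OF conjunct2[OF h]] by (rule exE)
  obtain \<Gamma> :: "'d \<Rightarrow> 'phi set" where G: "\<forall>x.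
        \<Gamma> x \<subseteq> label_set d x \<and>
        (\<forall>a\<in>\<Gamma> x. \<forall>b\<in>\<Gamma> x. comb a b \<in> \<Gamma> x) \<and>
        e x \<in> \<Gamma> x \<and>
        (\<forall>X. X \<subseteq> \<Gamma> x \<longrightarrow> directed_set comb X \<longrightarrow>
              (\<exists>s. is_sup_in comb (label_set d x) X s)) \<and>
        (\<forall>phi\<in>label_set d x.
           is_sup_in comb (label_set d x)
             {psi \<in> \<Gamma> x. way_below_in comb (label_set d x) psi phi} phi)"
    using conjunct2[OF conjunct2[OF h]] by (rule exE)
  have Gt: "\<Gamma> t \<subseteq> label_set d t \<and>
        (\<forall>a\<in>\<Gamma> t. \<forall>b\<in>\<Gamma> t. comb a b \<in> \<Gamma> t) \<and>
        e t \<in> \<Gamma> t \<and>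
        (\<forall>X. X \<subseteq> \<Gamma> t \<longrightarrow> directed_set comb X \<longrightarrow>
              (\<exists>s. is_sup_in comb (label_set d t) X s)) \<and>
        (\<forall>phi\<in>label_set d t.
           is_sup_in comb (label_set d t)
             {psi \<in> \<Gamma> t. way_below_in comb (label_set d t) psi phi} phi)"
    using G by (rule spec)
  have L: "LIA d comb marg e t"
  proof
    show "labeled_info_algebra d comb marg e" by (rule A)
    fix x show "x \<le> t" using t by (rule spec)
  qed
  show "domain_free_continuous (quot_carrier d comb e) (quot_comb d comb e)
            (quot_focus d comb marg e) (sigma_class d comb e (e z))"
    using LIA.main[OF L, of "\<Gamma> t" z] Gt by (elim conjE) 
qed


end
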